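(* Let $d_1\ge1$, $d_2\ge2$, $M=\{y=0\}\subseteq N=\{y_1=0\}$ in $\mathbb{R}^{d_1}_x\times\mathbb{R}^{d_2}_y$, and let $E$ be the extension operator $E(w)(x,y')=(2\pi)^{-(d_1+d_2-1)/2}\iint\hat w(\xi)\psi(\eta'/|\xi|)|\xi|^{-(d_2-1)}e^{i\xi\cdot x+i\eta'\cdot y'}d\xi\,d\eta'$ (with $\psi$ as in the context). Given $w_0\in\dot H^{\frac{3-d_2}{2}}(M)$, $w_{0,j}\in\dot H^{\frac{1-d_2}{2}}(M)$ for $j=2,\dots,d_2$, and $w_{10}\in\dot H^{\frac{1-d_2}{2}}(M)$, define $$u_0=E(w_0)+\sum_{j=2}^{d_2}y_j\,E(w_{0,j}),\qquad u_1=E(w_{10}).$$ Then $(u_0,u_1)\in X^C$ and $$\|(u_0,u_1)\|_{X^C}^2\le C\Bigl(\|w_0\|_{\dot H^{\frac{3-d_2}{2}}}^2+\sum_{j=2}^{d_2}\|w_{0,j}\|_{\dot H^{\frac{1-d_2}{2}}}^2+\|w_{10}\|_{\dot H^{\frac{1-d_2}{2}}}^2\Bigr).$$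
   Context: $y'=(y_2,\dots,y_{d_2})$ are coordinates on $N$ together with $x$; dual variables $(\xi,\eta')$. $\psi\in C_0^\infty(\mathbb{R}^{d_2-1})$ is even, $\psi\ge0$, supported in the unit ball, with $(2\pi)^{-(d_2-1)/2}\int\psi=1$. $\hat w(\xi)=(2\pi)^{-d_1/2}\int e^{-i\xi\cdot x}w\,dx$; $\dot H^s$ has norm $\int|\xi|^{2s}|\hat w|^2d\xi$. The data are meant as $w_0=u|_M$, $w_{0,j}=\partial_{y_j}u|_M$, $w_{10}=\partial_{y_1}u|_M$. With $\omega=\sqrt{|\xi|^2-|\eta'|^2}$ on $\{|\eta'|\le|\xi|\}$ and $\lambda=\sqrt{|\eta'|^2-|\xi|^2}$ elsewhere, $\|(v_0,v_1)\|_X^2=\iint_{\{|\eta'|<|\xi|\}}\omega^2|\hat v_0|^2+\iint_{\{|\xi|\le|\eta'|\}}\lambda^2|\hat v_0|^2+\iint|\hat v_1|^2$; $X^C$ consists of $v$ with finite $X$-norm and $\mathrm{supp}(\hat v_0,\hat v_1)\subseteq\{|\xi|\ge|\eta'|\}$, normed by $\|\cdot\|_X$. *)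

theory Defs
  imports "HOL-Analysis.Analysis"
begin

fun dirderiv :: "'b::real_normed_vector list \<Rightarrow> ('b \<Rightarrow> real) \<Rightarrow> 'b \<Rightarrow> real" where
  "dirderiv [] f = f"
| "dirderiv (v # vs) f = (\<lambda>x. frechet_derivative (dirderiv vs f) (at x) v)"

definition smooth_fun :: "('b::real_normed_vector \<Rightarrow> real) \<Rightarrow> bool" where
  "smooth_fun f \<longleftrightarrow> (\<forall>vs x. dirderiv vs f differentiable (at x))"

text \<open>Homogeneous Sobolev space on the Fourier side: W plays the role of the
  Fourier transform of w.\<close>
definition Hdot_mem :: "real \<Rightarrow> ('a::euclidean_space \<Rightarrow> complex) \<Rightarrow> bool" where
  "Hdot_mem s W \<longleftrightarrow> W \<in> borel_measurable lborel \<and>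
     integrable lborel (\<lambda>\<xi>. norm \<xi> powr (2 * s) * (cmod (W \<xi>))\<^sup>2)"

definition Hdot_norm2 :: "real \<Rightarrow> ('a::euclidean_space \<Rightarrow> complex) \<Rightarrow> real" where
  "Hdot_norm2 s W = (\<integral>\<xi>. norm \<xi> powr (2 * s) * (cmod (W \<xi>))\<^sup>2 \<partial>lborel)"

text \<open>Fourier transform (in (x,y')) of E(w), where W is the Fourier transform of w:
  W(xi) psi(eta'/|xi|) |xi|^(-(d2-1)), with d2 - 1 = DIM('b).\<close>
definition ext_symbol :: "('b::euclidean_space \<Rightarrow> real) \<Rightarrow> ('a::euclidean_space \<Rightarrow> complex)
    \<Rightarrow> 'a \<times> 'b \<Rightarrow> complex" where
  "ext_symbol \<psi> W z = W (fst z) *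
     complex_of_real (\<psi> (snd z /\<^sub>R norm (fst z)) * norm (fst z) powr (- real DIM('b)))"

text \<open>Derivative in the eta'-direction b; multiplication by y_j on the physical
  side corresponds to i times this derivative (j-th basis direction) on the Fourier side.\<close>
definition eta_deriv :: "('a \<times> 'b::real_normed_vector \<Rightarrow> complex) \<Rightarrow> 'b \<Rightarrow> 'a \<times> 'b \<Rightarrow> complex" where
  "eta_deriv F b z = vector_derivative (\<lambda>t::real. F (fst z, snd z + t *\<^sub>R b)) (at 0)"

text \<open>The X norm (squared) and membership in X^C, in terms of the Fourier
  transforms V0, V1 of (v0, v1); z = (xi, eta').\<close>
definition X_norm2 :: "('a::euclidean_space \<times> 'b::euclidean_space \<Rightarrow> complex)
    \<Rightarrow> ('a \<times> 'b \<Rightarrow> complex) \<Rightarrow> real" where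
  "X_norm2 V0 V1 =
     (\<integral>z. indicator {z. norm (snd z) < norm (fst z)} z *
           ((norm (fst z))\<^sup>2 - (norm (snd z))\<^sup>2) * (cmod (V0 z))\<^sup>2 \<partial>lborel)
   + (\<integral>z. indicator {z. norm (fst z) \<le> norm (snd z)} z *
           ((norm (snd z))\<^sup>2 - (norm (fst z))\<^sup>2) * (cmod (V0 z))\<^sup>2 \<partial>lborel)
   + (\<integral>z. (cmod (V1 z))\<^sup>2 \<partial>lborel)"

definition XC_mem :: "('a::euclidean_space \<times> 'b::euclidean_space \<Rightarrow> complex)
    \<Rightarrow> ('a \<times> 'b \<Rightarrow> complex) \<Rightarrow> bool" where
  "XC_mem V0 V1 \<longleftrightarrow>
     V0 \<in> borel_measurable lborel \<and> V1 \<in> borel_measurable lborel \<and>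
     integrable lborel (\<lambda>z. indicator {z. norm (snd z) < norm (fst z)} z *
           ((norm (fst z))\<^sup>2 - (norm (snd z))\<^sup>2) * (cmod (V0 z))\<^sup>2) \<and>
     integrable lborel (\<lambda>z. indicator {z. norm (fst z) \<le> norm (snd z)} z *
           ((norm (snd z))\<^sup>2 - (norm (fst z))\<^sup>2) * (cmod (V0 z))\<^sup>2) \<and>
     integrable lborel (\<lambda>z. (cmod (V1 z))\<^sup>2) \<and>
     (AE z in lborel. norm (fst z) < norm (snd z) \<longrightarrow> V0 z = 0 \<and> V1 z = 0)"

end

theory Submission
  imports Defs
begin


lemma nn_scale:
  fixes g :: "'b::euclidean_space \<Rightarrow> ennreal"
  assumes g[measurable]: "g \<in> borel_measurable borel" and c: "c > (0::real)"
  shows "(\<integral>\<^sup>+\<eta>. g (\<eta> /\<^sub>R c) \<partial>lborel) = ennreal (c ^ DIM('b)) * (\<integral>\<^sup>+x. g x \<partial>lborel)"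
proof -
  have eq: "(lborel::'b measure) = density (distr lborel borel (\<lambda>x. 0 + c *\<^sub>R x)) (\<lambda>_. \<bar>c\<bar>^DIM('b))"
    using lborel_affine[of c 0] c by simp
  have "(\<integral>\<^sup>+\<eta>. g (\<eta> /\<^sub>R c) \<partial>lborel) = (\<integral>\<^sup>+\<eta>. g (\<eta> /\<^sub>R c) \<partial>(density (distr lborel borel (\<lambda>x. 0 + c *\<^sub>R x)) (\<lambda>_. \<bar>c\<bar>^DIM('b))))"
    by (rule arg_cong[where f = "\<lambda>M. \<integral>\<^sup>+\<eta>. g (\<eta> /\<^sub>R c) \<partial>M"]) (rule eq)
  also have "\<dots> = (\<integral>\<^sup>+x. ennreal (\<bar>c\<bar>^DIM('b)) * g x \<partial>lborel)"
    using c by (simp add: nn_integral_density nn_integral_distr)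
  also have "\<dots> = ennreal (c ^ DIM('b)) * (\<integral>\<^sup>+x. g x \<partial>lborel)"
    using c by (simp add: nn_integral_cmult)
  finally show ?thesis .
qed



lemma fst_borel[measurable]: "fst \<in> (borel::('a::euclidean_space\<times>'b::euclidean_space) measure) \<rightarrow>\<^sub>M borel"
  by (intro borel_measurable_continuous_onI continuous_intros)
lemma snd_borel[measurable]: "snd \<in> (borel::('a::euclidean_space\<times>'b::euclidean_space) measure) \<rightarrow>\<^sub>M borel"
  by (intro borel_measurable_continuous_onI continuous_intros)

lemma core:
  fixes G :: "'a::euclidean_space \<Rightarrow> complex" and \<phi> :: "'b::euclidean_space \<Rightarrow> real"
  assumes G[measurable]: "G \<in> borel_measurable borel"
    and phi[measurable]: "\<phi> \<in> borel_measurable borel"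
    and phiint: "integrable lborel (\<lambda>y. (\<phi> y)\<^sup>2)"
    and Gint: "integrable lborel (\<lambda>\<xi>. norm \<xi> powr q * (cmod (G \<xi>))\<^sup>2)"
  shows "integrable lborel (\<lambda>z::'a\<times>'b. (cmod (G (fst z)))\<^sup>2 * (\<phi> (snd z /\<^sub>R norm (fst z)))\<^sup>2 * norm (fst z) powr (q - real DIM('b)))"
    and "(\<integral>z. (cmod (G (fst z)))\<^sup>2 * (\<phi> (snd z /\<^sub>R norm (fst z)))\<^sup>2 * norm (fst z) powr (q - real DIM('b)) \<partial>lborel)
         = (\<integral>y. (\<phi> y)\<^sup>2 \<partial>lborel) * (\<integral>\<xi>. norm \<xi> powr q * (cmod (G \<xi>))\<^sup>2 \<partial>lborel)"
proof -
  define f where "f = (\<lambda>z::'a\<times>'b. (cmod (G (fst z)))\<^sup>2 * (\<phi> (snd z /\<^sub>R norm (fst z)))\<^sup>2 * norm (fst z) powr (q - real DIM('b)))"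
  define I\<phi> where "I\<phi> = (\<integral>y. (\<phi> y)\<^sup>2 \<partial>lborel)"
  define IG where "IG = (\<integral>\<xi>. norm \<xi> powr q * (cmod (G \<xi>))\<^sup>2 \<partial>lborel)"
  have fm[measurable]: "f \<in> borel_measurable borel" unfolding f_def by measurable
  have fnn: "\<And>z. 0 \<le> f z" unfolding f_def by simp
  have Iphi: "(\<integral>\<^sup>+y. ennreal ((\<phi> y)\<^sup>2) \<partial>lborel) = ennreal I\<phi>"
    unfolding I\<phi>_def by (rule nn_integral_eq_integral[OF phiint]) simp
  have IGe: "(\<integral>\<^sup>+\<xi>. ennreal (norm \<xi> powr q * (cmod (G \<xi>))\<^sup>2) \<partial>lborel) = ennreal IG"
    unfolding IG_def by (rule nn_integral_eq_integral[OF Gint]) simp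
  have inner: "(\<integral>\<^sup>+\<eta>. ennreal (f (\<xi>, \<eta>)) \<partial>lborel) = ennreal (norm \<xi> powr q * (cmod (G \<xi>))\<^sup>2) * ennreal I\<phi>"
    if "\<xi> \<noteq> 0" for \<xi>
  proof -
    have pos: "norm \<xi> > 0" using that by simp
    have "(\<integral>\<^sup>+\<eta>. ennreal (f (\<xi>, \<eta>)) \<partial>lborel)
        = (\<integral>\<^sup>+\<eta>. ennreal ((cmod (G \<xi>))\<^sup>2 * norm \<xi> powr (q - real DIM('b))) * ennreal ((\<phi> (\<eta> /\<^sub>R norm \<xi>))\<^sup>2) \<partial>lborel)"
      unfolding f_def by (intro nn_integral_cong) (simp add: ennreal_mult'[symmetric] mult_ac)
    also have "\<dots> = ennreal ((cmod (G \<xi>))\<^sup>2 * norm \<xi> powr (q - real DIM('b))) * (\<integral>\<^sup>+\<eta>. ennreal ((\<phi> (\<eta> /\<^sub>R norm \<xi>))\<^sup>2) \<partial>lborel)"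
      by (rule nn_integral_cmult) measurable
    also have "(\<integral>\<^sup>+\<eta>. ennreal ((\<phi> (\<eta> /\<^sub>R norm \<xi>))\<^sup>2) \<partial>lborel) = ennreal (norm \<xi> ^ DIM('b)) * ennreal I\<phi>"
      using nn_scale[of "\<lambda>y. ennreal ((\<phi> y)\<^sup>2)" "norm \<xi>"] pos Iphi by simp
    also have "ennreal ((cmod (G \<xi>))\<^sup>2 * norm \<xi> powr (q - real DIM('b))) * (ennreal (norm \<xi> ^ DIM('b)) * ennreal I\<phi>)
        = ennreal ((cmod (G \<xi>))\<^sup>2 * norm \<xi> powr (q - real DIM('b)) * norm \<xi> ^ DIM('b)) * ennreal I\<phi>"
      by (simp add: ennreal_mult'[symmetric] mult.assoc)
    also have "(cmod (G \<xi>))\<^sup>2 * norm \<xi> powr (q - real DIM('b)) * norm \<xi> ^ DIM('b) = norm \<xi> powr q * (cmod (G \<xi>))\<^sup>2"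
      using pos by (simp add: powr_realpow[symmetric] powr_add[symmetric] mult_ac)
    finally show ?thesis .
  qed
  have "(\<integral>\<^sup>+z. ennreal (f z) \<partial>lborel) = (\<integral>\<^sup>+z. ennreal (f z) \<partial>(lborel \<Otimes>\<^sub>M lborel))"
    by (simp add: lborel_prod)
  also have "\<dots> = (\<integral>\<^sup>+\<xi>. \<integral>\<^sup>+\<eta>. ennreal (f (\<xi>, \<eta>)) \<partial>lborel \<partial>lborel)"
    by (rule lborel.nn_integral_fst[symmetric]) (simp add: lborel_prod)
  also have "\<dots> = (\<integral>\<^sup>+\<xi>. ennreal (norm \<xi> powr q * (cmod (G \<xi>))\<^sup>2) * ennreal I\<phi> \<partial>lborel)"
    by (intro nn_integral_cong_AE eventually_mono[OF AE_lborel_singleton[of 0]]) (simp add: inner)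
  also have "\<dots> = ennreal IG * ennreal I\<phi>"
    by (simp add: nn_integral_multc IGe)
  also have "\<dots> = ennreal (I\<phi> * IG)"
  proof -
    have "0 \<le> I\<phi>" unfolding I\<phi>_def by (rule integral_nonneg_AE) simp
    moreover have "0 \<le> IG" unfolding IG_def by (rule integral_nonneg_AE) simp
    ultimately show ?thesis by (simp add: ennreal_mult'[symmetric] mult.commute)
  qed
  finally have nn: "(\<integral>\<^sup>+z. ennreal (f z) \<partial>lborel) = ennreal (I\<phi> * IG)" .
  show int: "integrable lborel f"
    by (rule integrableI_nonneg) (use fnn nn in auto)
  have "integral\<^sup>L lborel f = enn2real (\<integral>\<^sup>+z. ennreal (f z) \<partial>lborel)"
    by (rule integral_eq_nn_integral) (use fnn in auto)
  also have "\<dots> = I\<phi> * IG" using nn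
    by (simp add: I\<phi>_def IG_def)
  finally show "integral\<^sup>L lborel f = I\<phi> * IG" .
qed



lemma psi_diff:
  assumes "smooth_fun \<psi>" shows "\<psi> differentiable (at y)"
proof -
  have "dirderiv [] \<psi> differentiable (at y)" using assms unfolding smooth_fun_def by blast
  then show ?thesis by simp
qed

lemma psi_cont:
  assumes "smooth_fun \<psi>" shows "continuous_on UNIV \<psi>"
  by (intro differentiable_imp_continuous_on differentiable_at_imp_differentiable_on psi_diff[OF assms])

lemma Dpsi_cont:
  fixes \<psi> :: "'b::real_normed_vector \<Rightarrow> real"
  assumes "smooth_fun \<psi>" shows "continuous_on UNIV (\<lambda>y. frechet_derivative \<psi> (at y) b)"
proof -
  have "\<And>x. dirderiv [b] \<psi> differentiable (at x)" using assms unfolding smooth_fun_def by blast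
  then have "continuous_on UNIV (dirderiv [b] \<psi>)"
    by (intro differentiable_imp_continuous_on differentiable_at_imp_differentiable_on)
  then show ?thesis by simp
qed

lemma psi_zero:
  fixes \<psi> :: "'b::real_normed_vector \<Rightarrow> real"
  assumes "closure {y. \<psi> y \<noteq> 0} \<subseteq> cball 0 1" "norm y > 1"
  shows "\<psi> y = 0"
proof (rule ccontr)
  assume "\<psi> y \<noteq> 0"
  then have "y \<in> closure {y. \<psi> y \<noteq> 0}" using closure_subset[of "{y. \<psi> y \<noteq> 0}"] by auto
  then have "y \<in> cball 0 1" using assms(1) by (rule subsetD[rotated])
  then show False using assms(2) by simp
qed

lemma Dpsi_zero:
  fixes \<psi> :: "'b::real_normed_vector \<Rightarrow> real"
  assumes "closure {y. \<psi> y \<noteq> 0} \<subseteq> cball 0 1" "norm y > 1"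
  shows "frechet_derivative \<psi> (at y) b = 0"
proof -
  have "((\<lambda>_. 0) has_derivative (\<lambda>_. 0)) (at y)" by simp
  then have "(\<psi> has_derivative (\<lambda>_. 0)) (at y)"
  proof (rule has_derivative_transform_within_open[where s="{y. norm y > 1}"])
    show "open {y::'b. norm y > 1}"
      by (intro open_Collect_less continuous_intros)
    show "y \<in> {y. norm y > 1}" using assms(2) by simp
    show "\<And>x. x \<in> {y. norm y > 1} \<Longrightarrow> 0 = \<psi> x"
      using psi_zero[OF assms(1)] by simp
  qed
  then show ?thesis using frechet_derivative_at by metis
qed

lemma ext_zero:
  fixes \<psi> :: "'b::euclidean_space \<Rightarrow> real"
  assumes "closure {y. \<psi> y \<noteq> 0} \<subseteq> cball 0 1" "norm (fst z) < norm (snd z)"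
  shows "ext_symbol \<psi> W z = 0"
proof (cases "fst z = 0")
  case True then show ?thesis by (simp add: ext_symbol_def)
next
  case False
  then have "norm (snd z /\<^sub>R norm (fst z)) > 1" using assms(2) by (simp add: field_simps)
  then show ?thesis using psi_zero[OF assms(1)] by (simp add: ext_symbol_def)
qed



lemma eta_formula:
  fixes \<psi> :: "'b::euclidean_space \<Rightarrow> real" and W :: "'a::euclidean_space \<Rightarrow> complex"
  assumes "smooth_fun \<psi>"
  shows "eta_deriv (ext_symbol \<psi> W) b z = W (fst z) * complex_of_real (norm (fst z) powr (- real DIM('b) - 1)
           * frechet_derivative \<psi> (at (snd z /\<^sub>R norm (fst z))) b)"
proof (cases "fst z = 0")
  case True
  then show ?thesis by (simp add: eta_deriv_def ext_symbol_def)
next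
  case False
  define r where "r = norm (fst z)"
  define y where "y = snd z /\<^sub>R r"
  define D where "D = frechet_derivative \<psi> (at y)"
  have r: "r > 0" using False r_def by simp
  have hD: "(\<psi> has_derivative D) (at y)" unfolding D_def
    using psi_diff[OF assms] frechet_derivative_works by blast
  have lin: "linear D" using hD has_derivative_linear by blast
  have eq: "\<And>t. (snd z + t *\<^sub>R b) /\<^sub>R norm (fst z) = y + t *\<^sub>R (b /\<^sub>R r)"
    by (simp add: y_def r_def scaleR_add_right)
  have "((\<lambda>t. y + t *\<^sub>R (b /\<^sub>R r)) has_derivative (\<lambda>t. t *\<^sub>R (b /\<^sub>R r))) (at 0)"
    by (auto intro!: derivative_eq_intros)
  then have "((\<lambda>t. \<psi> (y + t *\<^sub>R (b /\<^sub>R r))) has_derivative (\<lambda>t. D (t *\<^sub>R (b /\<^sub>R r)))) (at 0)"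
    using has_derivative_compose[of "\<lambda>t. y + t *\<^sub>R (b /\<^sub>R r)" _ 0 UNIV \<psi> D] hD by simp
  moreover have B: "(\<lambda>t. D (t *\<^sub>R (b /\<^sub>R r))) = (\<lambda>t. (D b / r) * t)"
    by (rule ext) (simp add: linear_cmul[OF lin] divide_inverse mult_ac)
  ultimately have "((\<lambda>t. \<psi> (y + t *\<^sub>R (b /\<^sub>R r))) has_derivative (\<lambda>t. (D b / r) * t)) (at 0)"
    by (simp only:)
  then have hr: "((\<lambda>t. \<psi> (y + t *\<^sub>R (b /\<^sub>R r))) has_real_derivative (D b / r)) (at 0)"
    unfolding has_field_derivative_def .
  have "((\<lambda>t. W (fst z) * complex_of_real (\<psi> (y + t *\<^sub>R (b /\<^sub>R r)) * r powr - real DIM('b)))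
        has_vector_derivative W (fst z) * complex_of_real (D b / r * r powr - real DIM('b))) (at 0)"
    by (intro has_vector_derivative_mult_right has_vector_derivative_of_real DERIV_cmult_right hr)
  moreover have fe: "(\<lambda>t. ext_symbol \<psi> W (fst z, snd z + t *\<^sub>R b)) = (\<lambda>t. W (fst z) * complex_of_real (\<psi> (y + t *\<^sub>R (b /\<^sub>R r)) * r powr - real DIM('b)))"
    by (rule ext) (simp add: ext_symbol_def y_def r_def scaleR_add_right mult.commute)
  ultimately have "eta_deriv (ext_symbol \<psi> W) b z = W (fst z) * complex_of_real (D b / r * r powr - real DIM('b))"
    unfolding eta_deriv_def by (simp only: vector_derivative_at)
  also have "D b / r * r powr - real DIM('b) = r powr (- real DIM('b) - 1) * D b"
  proof -
    have "r powr (- real DIM('b) - 1) = r powr (- real DIM('b)) / r" using r by (simp add: powr_diff)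
    then show ?thesis by simp
  qed
  finally show ?thesis by (simp add: r_def y_def D_def)
qed



lemma powr_sq: "(x powr a)\<^sup>2 = (x::real) powr (a + a)"
  by (simp only: power2_eq_square powr_add)

lemma sq_ext:
  fixes \<psi> :: "'b::euclidean_space \<Rightarrow> real" and W :: "'a::euclidean_space \<Rightarrow> complex"
  shows "(cmod (ext_symbol \<psi> W z))\<^sup>2 = (cmod (W (fst z)))\<^sup>2 * (\<psi> (snd z /\<^sub>R norm (fst z)))\<^sup>2
     * norm (fst z) powr (- real DIM('b) - real DIM('b))"
  by (simp add: ext_symbol_def norm_mult power_mult_distrib powr_sq)

lemma sq_ext_w:
  fixes \<psi> :: "'b::euclidean_space \<Rightarrow> real" and W :: "'a::euclidean_space \<Rightarrow> complex"
  shows "(norm (fst z))\<^sup>2 * (cmod (ext_symbol \<psi> W z))\<^sup>2 = (cmod (W (fst z)))\<^sup>2 * (\<psi> (snd z /\<^sub>R norm (fst z)))\<^sup>2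
     * norm (fst z) powr (2 - real DIM('b) - real DIM('b))"
proof (cases "fst z = 0")
  case True then show ?thesis by (simp add: sq_ext)
next
  case False
  have e: "2 - real DIM('b) - real DIM('b) = 2 + (- real DIM('b) - real DIM('b))" by simp
  have "norm (fst z) powr (2 - real DIM('b) - real DIM('b)) = norm (fst z) powr 2 * norm (fst z) powr (- real DIM('b) - real DIM('b))"
    by (simp only: e powr_add)
  then have "norm (fst z) powr (2 - real DIM('b) - real DIM('b)) = (norm (fst z))\<^sup>2 * norm (fst z) powr (- real DIM('b) - real DIM('b))"
    by simp
  then show ?thesis by (simp add: sq_ext mult_ac)
qed

lemma sq_B:
  fixes \<psi> :: "'b::euclidean_space \<Rightarrow> real" and W :: "'a::euclidean_space \<Rightarrow> complex"
  assumes "smooth_fun \<psi>"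
  shows "(norm (fst z))\<^sup>2 * (cmod (\<i> * eta_deriv (ext_symbol \<psi> W) b z))\<^sup>2 = (cmod (W (fst z)))\<^sup>2
     * (frechet_derivative \<psi> (at (snd z /\<^sub>R norm (fst z))) b)\<^sup>2
     * norm (fst z) powr (- real DIM('b) - real DIM('b))"
proof (cases "fst z = 0")
  case True then show ?thesis by (simp add: eta_formula[OF assms])
next
  case False
  have e: "- real DIM('b) - real DIM('b) = 2 + ((- real DIM('b) - 1) + (- real DIM('b) - 1))" by simp
  have "norm (fst z) powr (- real DIM('b) - real DIM('b)) = norm (fst z) powr 2 * (norm (fst z) powr (- real DIM('b) - 1))\<^sup>2"
    by (simp only: e powr_add power2_eq_square)
  then have h: "norm (fst z) powr (- real DIM('b) - real DIM('b)) = (norm (fst z))\<^sup>2 * (norm (fst z) powr (- real DIM('b) - 1))\<^sup>2"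
    by simp
  have "(cmod (\<i> * eta_deriv (ext_symbol \<psi> W) b z))\<^sup>2 = (cmod (W (fst z)))\<^sup>2 * (norm (fst z) powr (- real DIM('b) - 1))\<^sup>2
     * (frechet_derivative \<psi> (at (snd z /\<^sub>R norm (fst z))) b)\<^sup>2"
    by (simp only: eta_formula[OF assms] norm_mult norm_ii norm_of_real power_mult_distrib abs_mult power2_abs mult_1_left)
  then show ?thesis by (simp only: h mult_ac)
qed

lemma sqbound:
  fixes a :: complex and c :: "'i \<Rightarrow> complex"
  assumes "finite I"
  shows "(cmod (a + sum c I))\<^sup>2 \<le> 2 * (real (card I) + 1) * ((cmod a)\<^sup>2 + (\<Sum>i\<in>I. (cmod (c i))\<^sup>2))"
proof -
  define x where "x = cmod a"
  define S where "S = (\<Sum>i\<in>I. cmod (c i))"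
  define Q where "Q = (\<Sum>i\<in>I. (cmod (c i))\<^sup>2)"
  have Q0: "0 \<le> Q" unfolding Q_def by (simp add: sum_nonneg)
  have x0: "0 \<le> x" unfolding x_def by simp
  have "cmod (a + sum c I) \<le> x + S" unfolding x_def S_def
    by (rule order_trans[OF norm_triangle_ineq]) (simp add: norm_sum)
  then have "(cmod (a + sum c I))\<^sup>2 \<le> (x + S)\<^sup>2" by (simp add: power_mono)
  also have "\<dots> \<le> 2 * x\<^sup>2 + 2 * S\<^sup>2" using sum_squares_ge_zero[of "x - S" 0]
    by (simp add: power2_eq_square algebra_simps)
  also have "S\<^sup>2 \<le> Q * card I" unfolding S_def Q_def by (rule sum_squared_le_sum_of_squares)
  then have "2 * x\<^sup>2 + 2 * S\<^sup>2 \<le> 2 * x\<^sup>2 + 2 * (Q * card I)" by simp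
  also have "\<dots> \<le> 2 * (real (card I) + 1) * (x\<^sup>2 + Q)"
    using Q0 by (simp add: algebra_simps)
  finally show ?thesis unfolding x_def Q_def .
qed



lemma sqint:
  fixes \<phi> :: "'b::euclidean_space \<Rightarrow> real"
  assumes "continuous_on UNIV \<phi>" "\<And>y. norm y > 1 \<Longrightarrow> \<phi> y = 0"
  shows "integrable lborel (\<lambda>y. (\<phi> y)\<^sup>2)"
proof -
  have "integrable lborel (\<lambda>y. indicator (cball (0::'b) 1) y *\<^sub>R (\<phi> y)\<^sup>2)"
    by (rule borel_integrable_compact) (auto intro: continuous_intros continuous_on_subset[OF assms(1)])
  moreover have "(\<lambda>y. indicator (cball (0::'b) 1) y *\<^sub>R (\<phi> y)\<^sup>2) = (\<lambda>y. (\<phi> y)\<^sup>2)"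
    using assms(2) by (auto simp: indicator_def fun_eq_iff)
  ultimately show ?thesis by simp
qed



theorem theorem7:
  fixes \<psi> :: "'b::euclidean_space \<Rightarrow> real"
  assumes psi_smooth: "smooth_fun \<psi>"
    and psi_even: "\<forall>y. \<psi> (- y) = \<psi> y"
    and psi_nonneg: "\<forall>y. 0 \<le> \<psi> y"
    and psi_supp: "closure {y. \<psi> y \<noteq> 0} \<subseteq> cball 0 1"
    and psi_int: "(2 * pi) powr (- real DIM('b) / 2) * (\<integral>y. \<psi> y \<partial>lborel) = 1"
  shows "\<exists>C. \<forall>(W0 :: 'a::euclidean_space \<Rightarrow> complex) (Wj :: 'b \<Rightarrow> 'a \<Rightarrow> complex) W10.
     Hdot_mem ((3 - real (DIM('b) + 1)) / 2) W0 \<and>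
     (\<forall>b\<in>Basis. Hdot_mem ((1 - real (DIM('b) + 1)) / 2) (Wj b)) \<and>
     Hdot_mem ((1 - real (DIM('b) + 1)) / 2) W10 \<longrightarrow>
     (let U0 = (\<lambda>z. ext_symbol \<psi> W0 z +
                    (\<Sum>b\<in>Basis. \<i> * eta_deriv (ext_symbol \<psi> (Wj b)) b z));
          U1 = ext_symbol \<psi> W10
      in XC_mem U0 U1 \<and>
         X_norm2 U0 U1 \<le> C * (Hdot_norm2 ((3 - real (DIM('b) + 1)) / 2) W0
             + (\<Sum>b\<in>Basis. Hdot_norm2 ((1 - real (DIM('b) + 1)) / 2) (Wj b))
             + Hdot_norm2 ((1 - real (DIM('b) + 1)) / 2) W10))"
proof -
  define Dp where "Dp = (\<lambda>b y. frechet_derivative \<psi> (at y) b)"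
  have psi_meas[measurable]: "\<psi> \<in> borel_measurable borel"
    using psi_cont[OF psi_smooth] by (rule borel_measurable_continuous_onI)
  have Dp_meas[measurable]: "Dp b \<in> borel_measurable borel" for b
    using Dpsi_cont[OF psi_smooth, of b] unfolding Dp_def by (rule borel_measurable_continuous_onI)
  have psi_sq: "integrable lborel (\<lambda>y. (\<psi> y)\<^sup>2)"
    by (rule sqint[OF psi_cont[OF psi_smooth]]) (rule psi_zero[OF psi_supp])
  have Dp_sq: "integrable lborel (\<lambda>y. (Dp b y)\<^sup>2)" for b
    unfolding Dp_def by (rule sqint[OF Dpsi_cont[OF psi_smooth]]) (rule Dpsi_zero[OF psi_supp])
  define c\<psi> where "c\<psi> = (\<integral>y. (\<psi> y)\<^sup>2 \<partial>lborel)"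
  define cD where "cD = (\<lambda>b. \<integral>y. (Dp b y)\<^sup>2 \<partial>lborel)"
  define TD where "TD = (\<Sum>b\<in>(Basis::'b set). cD b)"
  define K where "K = 2 * (real (card (Basis::'b set)) + 1)"
  define C where "C = K * (c\<psi> + TD) + c\<psi>"
  have c\<psi>0: "0 \<le> c\<psi>" unfolding c\<psi>_def by (rule integral_nonneg_AE) simp
  have cD0: "0 \<le> cD b" for b unfolding cD_def by (rule integral_nonneg_AE) simp
  have TD0: "0 \<le> TD" unfolding TD_def by (simp add: sum_nonneg cD0)
  have K0: "0 \<le> K" unfolding K_def by simp
  have e0: "2 * ((3 - real (DIM('b) + 1)) / 2) = 2 - real DIM('b)" by simp
  have e1: "2 * ((1 - real (DIM('b) + 1)) / 2) = - real DIM('b)" by simp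
  show ?thesis
  proof (intro exI[of _ C] allI impI)
    fix W0 :: "'a \<Rightarrow> complex" and Wj :: "'b \<Rightarrow> 'a \<Rightarrow> complex" and W10 :: "'a \<Rightarrow> complex"
    assume hyp: "Hdot_mem ((3 - real (DIM('b) + 1)) / 2) W0 \<and>
     (\<forall>b\<in>Basis. Hdot_mem ((1 - real (DIM('b) + 1)) / 2) (Wj b)) \<and>
     Hdot_mem ((1 - real (DIM('b) + 1)) / 2) W10"
    define H0 where "H0 = Hdot_norm2 ((3 - real (DIM('b) + 1)) / 2) W0"
    define H where "H = (\<lambda>b. Hdot_norm2 ((1 - real (DIM('b) + 1)) / 2) (Wj b))"
    define H10 where "H10 = Hdot_norm2 ((1 - real (DIM('b) + 1)) / 2) W10"
    have H00: "0 \<le> H0" unfolding H0_def Hdot_norm2_def by (rule integral_nonneg_AE) simp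
    have H0': "0 \<le> H b" for b unfolding H_def Hdot_norm2_def by (rule integral_nonneg_AE) simp
    have H100: "0 \<le> H10" unfolding H10_def Hdot_norm2_def by (rule integral_nonneg_AE) simp
    have W0m[measurable]: "W0 \<in> borel_measurable borel"
      and W0i: "integrable lborel (\<lambda>\<xi>. norm \<xi> powr (2 - real DIM('b)) * (cmod (W0 \<xi>))\<^sup>2)"
      using hyp unfolding Hdot_mem_def e0 by auto
    have W10m[measurable]: "W10 \<in> borel_measurable borel"
      and W10i: "integrable lborel (\<lambda>\<xi>. norm \<xi> powr (- real DIM('b)) * (cmod (W10 \<xi>))\<^sup>2)"
      using hyp unfolding Hdot_mem_def e1 by auto
    have Wjm[measurable]: "Wj b \<in> borel_measurable borel"
      and Wji: "integrable lborel (\<lambda>\<xi>. norm \<xi> powr (- real DIM('b)) * (cmod (Wj b \<xi>))\<^sup>2)"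
      if "b \<in> Basis" for b
      using hyp that unfolding Hdot_mem_def e1 by auto
    have H0e: "H0 = (\<integral>\<xi>. norm \<xi> powr (2 - real DIM('b)) * (cmod (W0 \<xi>))\<^sup>2 \<partial>lborel)"
      unfolding H0_def Hdot_norm2_def e0 ..
    have He: "H b = (\<integral>\<xi>. norm \<xi> powr (- real DIM('b)) * (cmod (Wj b \<xi>))\<^sup>2 \<partial>lborel)" for b
      unfolding H_def Hdot_norm2_def e1 ..
    have H10e: "H10 = (\<integral>\<xi>. norm \<xi> powr (- real DIM('b)) * (cmod (W10 \<xi>))\<^sup>2 \<partial>lborel)"
      unfolding H10_def Hdot_norm2_def e1 ..
    define U0 where "U0 = (\<lambda>z. ext_symbol \<psi> W0 z + (\<Sum>b\<in>Basis. \<i> * eta_deriv (ext_symbol \<psi> (Wj b)) b z))"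
    define U1 where "U1 = ext_symbol \<psi> W10"
    define gA where "gA = (\<lambda>z::'a\<times>'b. (cmod (W0 (fst z)))\<^sup>2 * (\<psi> (snd z /\<^sub>R norm (fst z)))\<^sup>2 * norm (fst z) powr (2 - real DIM('b) - real DIM('b)))"
    define gB where "gB = (\<lambda>b (z::'a\<times>'b). (cmod (Wj b (fst z)))\<^sup>2 * (Dp b (snd z /\<^sub>R norm (fst z)))\<^sup>2 * norm (fst z) powr (- real DIM('b) - real DIM('b)))"
    define g1 where "g1 = (\<lambda>z::'a\<times>'b. (cmod (W10 (fst z)))\<^sup>2 * (\<psi> (snd z /\<^sub>R norm (fst z)))\<^sup>2 * norm (fst z) powr (- real DIM('b) - real DIM('b)))"
    have gAi: "integrable lborel gA" and gAe: "integral\<^sup>L lborel gA = c\<psi> * H0"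
      using core[OF W0m psi_meas psi_sq W0i] unfolding gA_def c\<psi>_def H0e by auto
    have gBi: "integrable lborel (gB b)" and gBe: "integral\<^sup>L lborel (gB b) = cD b * H b" if "b \<in> Basis" for b
      using core[OF Wjm[OF that] Dp_meas Dp_sq Wji[OF that]] unfolding gB_def cD_def He by auto
    have g1i: "integrable lborel g1" and g1e: "integral\<^sup>L lborel g1 = c\<psi> * H10"
      using core[OF W10m psi_meas psi_sq W10i] unfolding g1_def c\<psi>_def H10e by auto
    show "let U0 = (\<lambda>z. ext_symbol \<psi> W0 z +
                    (\<Sum>b\<in>Basis. \<i> * eta_deriv (ext_symbol \<psi> (Wj b)) b z));
          U1 = ext_symbol \<psi> W10
      in XC_mem U0 U1 \<and>
         X_norm2 U0 U1 \<le> C * (Hdot_norm2 ((3 - real (DIM('b) + 1)) / 2) W0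
             + (\<Sum>b\<in>Basis. Hdot_norm2 ((1 - real (DIM('b) + 1)) / 2) (Wj b))
             + Hdot_norm2 ((1 - real (DIM('b) + 1)) / 2) W10)"
    proof -
    have U0e: "U0 = (\<lambda>z. ext_symbol \<psi> W0 z + (\<Sum>b\<in>Basis. \<i> * (Wj b (fst z) * complex_of_real (norm (fst z) powr (- real DIM('b) - 1) * Dp b (snd z /\<^sub>R norm (fst z))))))"
      unfolding U0_def Dp_def by (simp add: eta_formula[OF psi_smooth])
    have U0m[measurable]: "U0 \<in> borel_measurable borel"
      unfolding U0e
    proof (intro borel_measurable_add borel_measurable_sum)
      show "(\<lambda>z. ext_symbol \<psi> W0 z) \<in> borel_measurable borel" unfolding ext_symbol_def by measurable
      fix b :: 'b assume "b \<in> Basis"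
      note [measurable] = Wjm[OF this]
      show "(\<lambda>z. \<i> * (Wj b (fst z) * complex_of_real (norm (fst z) powr (- real DIM('b) - 1) * Dp b (snd z /\<^sub>R norm (fst z))))) \<in> borel_measurable borel"
        by measurable
    qed
    have U1m[measurable]: "U1 \<in> borel_measurable borel" unfolding U1_def ext_symbol_def by measurable
    have U0z: "U0 z = 0" if "norm (fst z) < norm (snd z)" for z
    proof -
      have "Dp b (snd z /\<^sub>R norm (fst z)) = 0" if "fst z \<noteq> 0" for b
      proof -
        have "norm (snd z /\<^sub>R norm (fst z)) > 1" using \<open>norm (fst z) < norm (snd z)\<close> that by (simp add: field_simps)
        then show ?thesis unfolding Dp_def by (rule Dpsi_zero[OF psi_supp])
      qed
      then show ?thesis unfolding U0e using ext_zero[OF psi_supp that] by (cases "fst z = 0") simp_all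
    qed
    have U1z: "U1 z = 0" if "norm (fst z) < norm (snd z)" for z
      unfolding U1_def using ext_zero[OF psi_supp that] .
    define f1 where "f1 = (\<lambda>z::'a\<times>'b. indicator {z. norm (snd z) < norm (fst z)} z * ((norm (fst z))\<^sup>2 - (norm (snd z))\<^sup>2) * (cmod (U0 z))\<^sup>2)"
    define f2 where "f2 = (\<lambda>z::'a\<times>'b. indicator {z. norm (fst z) \<le> norm (snd z)} z * ((norm (snd z))\<^sup>2 - (norm (fst z))\<^sup>2) * (cmod (U0 z))\<^sup>2)"
    define R where "R = (\<lambda>z. K * (gA z + (\<Sum>b\<in>Basis. gB b z)))"
    have f2z: "f2 = (\<lambda>_. 0)"
    proof
      fix z :: "'a\<times>'b"
      show "f2 z = 0"
      proof (cases "norm (fst z) < norm (snd z)")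
        case True then show ?thesis unfolding f2_def using U0z by simp
      next
        case False then show ?thesis unfolding f2_def by (auto simp: indicator_def)
      qed
    qed
    have f1m[measurable]: "f1 \<in> borel_measurable borel" unfolding f1_def by measurable
    have f10: "0 \<le> f1 z" for z
    proof -
      have "indicator {z. norm (snd z) < norm (fst z)} z * ((norm (fst z))\<^sup>2 - (norm (snd z))\<^sup>2) \<ge> (0::real)"
        by (auto simp: indicator_def intro: power_strict_mono[THEN less_imp_le])
      then show ?thesis unfolding f1_def by simp
    qed
    have gAz: "gA z = (norm (fst z))\<^sup>2 * (cmod (ext_symbol \<psi> W0 z))\<^sup>2" for z
      unfolding gA_def by (rule sq_ext_w[symmetric])
    have gBz: "gB b z = (norm (fst z))\<^sup>2 * (cmod (\<i> * eta_deriv (ext_symbol \<psi> (Wj b)) b z))\<^sup>2" for b z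
      unfolding gB_def Dp_def by (rule sq_B[OF psi_smooth, symmetric])
    have f1R: "f1 z \<le> R z" for z
    proof -
      have "indicator {z. norm (snd z) < norm (fst z)} z * ((norm (fst z))\<^sup>2 - (norm (snd z))\<^sup>2) \<le> (norm (fst z))\<^sup>2"
        by (auto simp: indicator_def)
      then have "f1 z \<le> (norm (fst z))\<^sup>2 * (cmod (U0 z))\<^sup>2"
        unfolding f1_def by (rule mult_right_mono) simp
      also have "(cmod (U0 z))\<^sup>2 \<le> K * ((cmod (ext_symbol \<psi> W0 z))\<^sup>2 + (\<Sum>b\<in>Basis. (cmod (\<i> * eta_deriv (ext_symbol \<psi> (Wj b)) b z))\<^sup>2))"
        unfolding U0_def K_def by (rule sqbound) simp
      then have "(norm (fst z))\<^sup>2 * (cmod (U0 z))\<^sup>2 \<le> (norm (fst z))\<^sup>2 * (K * ((cmod (ext_symbol \<psi> W0 z))\<^sup>2 + (\<Sum>b\<in>Basis. (cmod (\<i> * eta_deriv (ext_symbol \<psi> (Wj b)) b z))\<^sup>2)))"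
        by (rule mult_left_mono) simp
      also have "\<dots> = R z"
        unfolding R_def gAz gBz by (simp add: algebra_simps sum_distrib_left)
      finally show ?thesis .
    qed
    have Ri: "integrable lborel R"
      unfolding R_def using gAi gBi by (intro integrable_mult_right integrable_add integrable_sum) auto
    have Re: "integral\<^sup>L lborel R = K * (c\<psi> * H0 + (\<Sum>b\<in>Basis. cD b * H b))"
    proof -
      have "integral\<^sup>L lborel R = K * (integral\<^sup>L lborel gA + (\<integral>z. (\<Sum>b\<in>Basis. gB b z) \<partial>lborel))"
        unfolding R_def using gAi gBi by (simp add: integral_add)
      also have "(\<integral>z. (\<Sum>b\<in>Basis. gB b z) \<partial>lborel) = (\<Sum>b\<in>Basis. integral\<^sup>L lborel (gB b))"
        using Bochner_Integration.integral_sum[where I=Basis and M=lborel and f=gB] gBi by simp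
      also have "\<dots> = (\<Sum>b\<in>Basis. cD b * H b)" by (rule sum.cong) (simp_all add: gBe)
      finally show ?thesis by (simp add: gAe)
    qed
    have f1i: "integrable lborel f1"
      by (rule Bochner_Integration.integrable_bound[OF Ri]) (use f10 f1R in \<open>auto intro!: AE_I2 simp: abs_of_nonneg order_trans[OF f1R]\<close>)
    have f1le: "integral\<^sup>L lborel f1 \<le> K * (c\<psi> * H0 + (\<Sum>b\<in>Basis. cD b * H b))"
      using Bochner_Integration.integral_mono[OF f1i Ri f1R] Re by simp
    have U1g: "(\<lambda>z. (cmod (U1 z))\<^sup>2) = g1"
      unfolding U1_def g1_def by (rule ext) (rule sq_ext)
    have XC: "XC_mem U0 U1"
      unfolding XC_mem_def
      using f1i U1g g1i f2z U0z U1z unfolding f1_def f2_def by auto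
    have Xe: "X_norm2 U0 U1 = integral\<^sup>L lborel f1 + integral\<^sup>L lborel f2 + c\<psi> * H10"
      unfolding X_norm2_def f1_def f2_def U1g g1e ..
    have SH: "(\<Sum>b\<in>Basis. cD b * H b) \<le> TD * (\<Sum>b\<in>Basis. H b)"
    proof -
      have "(\<Sum>b\<in>Basis. cD b * H b) \<le> (\<Sum>b\<in>Basis. TD * H b)"
      proof (rule sum_mono)
        fix b :: 'b assume "b \<in> Basis"
        then have "cD b \<le> TD" unfolding TD_def by (intro member_le_sum cD0) auto
        then show "cD b * H b \<le> TD * H b" using H0' by (rule mult_right_mono)
      qed
      then show ?thesis by (simp add: sum_distrib_left)
    qed
    define SHs where "SHs = (\<Sum>b\<in>(Basis::'b set). H b)"
    have SHs0: "0 \<le> SHs" unfolding SHs_def by (simp add: sum_nonneg H0')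
    have "X_norm2 U0 U1 \<le> K * (c\<psi> * H0 + TD * SHs) + c\<psi> * H10"
    proof -
      have "K * (\<Sum>b\<in>Basis. cD b * H b) \<le> K * (TD * SHs)" unfolding SHs_def using SH K0 by (rule mult_left_mono)
      then show ?thesis using Xe f1le f2z by (simp add: algebra_simps)
    qed
    also have "\<dots> \<le> C * (H0 + SHs + H10)"
    proof -
      have eq: "C * (H0 + SHs + H10) = (K * (c\<psi> * H0 + TD * SHs) + c\<psi> * H10)
         + (K * TD * H0 + c\<psi> * H0 + K * c\<psi> * SHs + c\<psi> * SHs + K * c\<psi> * H10 + K * TD * H10)"
        unfolding C_def by (simp add: algebra_simps)
      have "0 \<le> K * TD * H0 + c\<psi> * H0 + K * c\<psi> * SHs + c\<psi> * SHs + K * c\<psi> * H10 + K * TD * H10"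
        using K0 TD0 c\<psi>0 H00 H100 SHs0 by (intro add_nonneg_nonneg mult_nonneg_nonneg) auto
      then show ?thesis unfolding eq by linarith
    qed
    finally have "X_norm2 U0 U1 \<le> C * (H0 + (\<Sum>b\<in>Basis. H b) + H10)" unfolding SHs_def .
    with XC show ?thesis unfolding Let_def U0_def[symmetric] U1_def[symmetric] H0_def[symmetric] H_def[symmetric] H10_def[symmetric] by simp
    qed
  qed
qed


end
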